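(* Every split graph that is CIS is $\cap$-edge simplicial.
   Context: A graph is split if its vertex set can be partitioned into a clique and a stable set. A graph is CIS if every maximal clique and every maximal stable set intersect. A clique $C$ is simplicial if $C=N[v]$ for some vertex $v$; a graph is edge simplicial if every edge lies in a simplicial clique; it is $\cap$-edge simplicial if both it and its complement are edge simplicial. *)

theory Defs
  imports Main
begin

definition graph :: "'a set \<Rightarrow> ('a \<Rightarrow> 'a \<Rightarrow> bool) \<Rightarrow> bool" where
  "graph V E \<longleftrightarrow> finite V \<and> (\<forall>x y. E x y \<longrightarrow> x \<in> V \<and> y \<in> V \<and> x \<noteq> y \<and> E y x)"

definition clique :: "'a set \<Rightarrow> ('a \<Rightarrow> 'a \<Rightarrow> bool) \<Rightarrow> 'a set \<Rightarrow> bool" where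
  "clique V E C \<longleftrightarrow> C \<subseteq> V \<and> (\<forall>x\<in>C. \<forall>y\<in>C. x \<noteq> y \<longrightarrow> E x y)"

definition stable :: "'a set \<Rightarrow> ('a \<Rightarrow> 'a \<Rightarrow> bool) \<Rightarrow> 'a set \<Rightarrow> bool" where
  "stable V E S \<longleftrightarrow> S \<subseteq> V \<and> (\<forall>x\<in>S. \<forall>y\<in>S. x \<noteq> y \<longrightarrow> \<not> E x y)"

definition max_clique :: "'a set \<Rightarrow> ('a \<Rightarrow> 'a \<Rightarrow> bool) \<Rightarrow> 'a set \<Rightarrow> bool" where
  "max_clique V E C \<longleftrightarrow> clique V E C \<and> (\<forall>D. clique V E D \<and> C \<subseteq> D \<longrightarrow> D = C)"

definition max_stable :: "'a set \<Rightarrow> ('a \<Rightarrow> 'a \<Rightarrow> bool) \<Rightarrow> 'a set \<Rightarrow> bool" where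
  "max_stable V E S \<longleftrightarrow> stable V E S \<and> (\<forall>T. stable V E T \<and> S \<subseteq> T \<longrightarrow> T = S)"

definition split_graph :: "'a set \<Rightarrow> ('a \<Rightarrow> 'a \<Rightarrow> bool) \<Rightarrow> bool" where
  "split_graph V E \<longleftrightarrow> (\<exists>K S. K \<union> S = V \<and> K \<inter> S = {} \<and> clique V E K \<and> stable V E S)"

definition CIS :: "'a set \<Rightarrow> ('a \<Rightarrow> 'a \<Rightarrow> bool) \<Rightarrow> bool" where
  "CIS V E \<longleftrightarrow> (\<forall>C S. max_clique V E C \<and> max_stable V E S \<longrightarrow> C \<inter> S \<noteq> {})"

definition closed_nbhd :: "'a set \<Rightarrow> ('a \<Rightarrow> 'a \<Rightarrow> bool) \<Rightarrow> 'a \<Rightarrow> 'a set" where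
  "closed_nbhd V E v = insert v {u \<in> V. E v u}"

definition simplicial_clique :: "'a set \<Rightarrow> ('a \<Rightarrow> 'a \<Rightarrow> bool) \<Rightarrow> 'a set \<Rightarrow> bool" where
  "simplicial_clique V E C \<longleftrightarrow> clique V E C \<and> (\<exists>v\<in>V. C = closed_nbhd V E v)"

definition edge_simplicial :: "'a set \<Rightarrow> ('a \<Rightarrow> 'a \<Rightarrow> bool) \<Rightarrow> bool" where
  "edge_simplicial V E \<longleftrightarrow>
     (\<forall>x\<in>V. \<forall>y\<in>V. E x y \<longrightarrow> (\<exists>C. simplicial_clique V E C \<and> x \<in> C \<and> y \<in> C))"

definition compl_graph :: "'a set \<Rightarrow> ('a \<Rightarrow> 'a \<Rightarrow> bool) \<Rightarrow> 'a \<Rightarrow> 'a \<Rightarrow> bool" where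
  "compl_graph V E x y \<longleftrightarrow> x \<in> V \<and> y \<in> V \<and> x \<noteq> y \<and> \<not> E x y"

definition cap_edge_simplicial :: "'a set \<Rightarrow> ('a \<Rightarrow> 'a \<Rightarrow> bool) \<Rightarrow> bool" where
  "cap_edge_simplicial V E \<longleftrightarrow> edge_simplicial V E \<and> edge_simplicial V (compl_graph V E)"

end

theory Submission
  imports Defs
begin

lemma graphD: assumes "graph V E" "E x y" shows "x \<in> V" "y \<in> V" "x \<noteq> y" "E y x"
  using assms unfolding graph_def by blast+

lemma cliqueD: "clique V E C \<Longrightarrow> x \<in> C \<Longrightarrow> y \<in> C \<Longrightarrow> x \<noteq> y \<Longrightarrow> E x y"
  unfolding clique_def by blast

lemma stableD: "stable V E C \<Longrightarrow> x \<in> C \<Longrightarrow> y \<in> C \<Longrightarrow> x \<noteq> y \<Longrightarrow> \<not> E x y"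
  unfolding stable_def by blast

lemma nbhd_mem: "u \<in> closed_nbhd V E v \<longleftrightarrow> u = v \<or> (u \<in> V \<and> E v u)"
  unfolding closed_nbhd_def by simp

lemma nbhd_clique:
  assumes g: "graph V E" and KS: "K \<union> S = V" "clique V E K" "stable V E S" and v: "v \<in> S"
  shows "clique V E (closed_nbhd V E v)"
proof -
  have sub: "\<And>u. E v u \<Longrightarrow> u \<in> K"
  proof -
    fix u assume e: "E v u"
    hence "u \<noteq> v" using graphD[OF g] by metis
    hence "u \<notin> S" using e v KS(3) stableD by metis
    moreover have "u \<in> V" using graphD(2)[OF g e] .
    ultimately show "u \<in> K" using KS(1) by blast
  qed
  have vV: "v \<in> V" using v KS(1) by blast
  show ?thesis unfolding clique_def
  proof (intro conjI ballI impI)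
    show "closed_nbhd V E v \<subseteq> V" using vV unfolding nbhd_mem by (auto simp: nbhd_mem)
  next
    fix x y assume x: "x \<in> closed_nbhd V E v" and y: "y \<in> closed_nbhd V E v" and xy: "x \<noteq> y"
    show "E x y"
    proof (cases "x = v")
      case True thus ?thesis using y xy by (auto simp: nbhd_mem)
    next
      case False
      hence exv: "E v x" using x by (simp add: nbhd_mem)
      hence xK: "x \<in> K" by (rule sub)
      show ?thesis
      proof (cases "y = v")
        case True thus ?thesis using exv graphD(4)[OF g] by metis
      next
        case False
        hence "E v y" using y by (simp add: nbhd_mem)
        hence "y \<in> K" by (rule sub)
        thus ?thesis using xK xy KS(2) cliqueD by metis
      qed
    qed
  qed
qed

lemma core:
  assumes g: "graph V E" and KS: "K \<union> S = V" "K \<inter> S = {}" "clique V E K" "stable V E S"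
    and cis: "CIS V E"
  shows "edge_simplicial V E"
  unfolding edge_simplicial_def
proof (intro ballI impI)
  fix x y assume xV: "x \<in> V" and yV: "y \<in> V" and exy: "E x y"
  have nb: "\<And>v. v \<in> S \<Longrightarrow> simplicial_clique V E (closed_nbhd V E v)"
  proof -
    fix v assume v: "v \<in> S"
    have "v \<in> V" using v KS(1) by blast
    thus "simplicial_clique V E (closed_nbhd V E v)"
      using nbhd_clique[OF g KS(1) KS(3) KS(4) v] unfolding simplicial_clique_def by blast
  qed
  have eyx: "E y x" using graphD(4)[OF g exy] .
  show "\<exists>C. simplicial_clique V E C \<and> x \<in> C \<and> y \<in> C"
  proof (cases "x \<in> S")
    case True
    have "x \<in> closed_nbhd V E x" "y \<in> closed_nbhd V E x" using exy yV by (auto simp: nbhd_mem)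
    thus ?thesis using nb[OF True] by blast
  next
    case xS: False
    show ?thesis
    proof (cases "y \<in> S")
      case True
      have "x \<in> closed_nbhd V E y" "y \<in> closed_nbhd V E y" using eyx xV by (auto simp: nbhd_mem)
      thus ?thesis using nb[OF True] by blast
    next
      case yS: False
      have xK: "x \<in> K" and yK: "y \<in> K" using xS yS xV yV KS(1) by auto
      show ?thesis
      proof (cases "\<exists>s\<in>S. \<forall>k\<in>K. E s k")
        case True
        then obtain s where s: "s \<in> S" "\<forall>k\<in>K. E s k" by blast
        have "x \<in> closed_nbhd V E s" "y \<in> closed_nbhd V E s" using s xK yK xV yV by (auto simp: nbhd_mem)
        thus ?thesis using nb[OF s(1)] by blast
      next
        case False
        have mc: "max_clique V E K"
          unfolding max_clique_def
        proof (intro conjI allI impI)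
          show "clique V E K" by fact
        next
          fix D assume D: "clique V E D \<and> K \<subseteq> D"
          show "D = K"
          proof (rule ccontr)
            assume "D \<noteq> K"
            then obtain d where d: "d \<in> D" "d \<notin> K" using D by blast
            have "D \<subseteq> V" using D unfolding clique_def by blast
            hence dS: "d \<in> S" using d KS(1) by blast
            have "\<forall>k\<in>K. E d k"
            proof
              fix k assume k: "k \<in> K"
              hence "k \<in> D" "k \<noteq> d" using D d by auto
              thus "E d k" using D d(1) cliqueD by metis
            qed
            thus False using False dS by blast
          qed
        qed
        have "K \<inter> S = {}" by fact
        hence "\<not> max_stable V E S" using cis mc unfolding CIS_def by blast
        then obtain T where T: "stable V E T" "S \<subseteq> T" "T \<noteq> S"
          using KS(4) unfolding max_stable_def by blast
        then obtain k where k: "k \<in> T" "k \<notin> S" by blast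
        have kV: "k \<in> V" using T(1) k unfolding stable_def by blast
        hence kK: "k \<in> K" using k KS(1) by blast
        have "closed_nbhd V E k = K"
        proof
          show "closed_nbhd V E k \<subseteq> K"
          proof
            fix u assume u: "u \<in> closed_nbhd V E k"
            show "u \<in> K"
            proof (cases "u = k")
              case True thus ?thesis using kK by simp
            next
              case False
              hence uV: "u \<in> V" and eku: "E k u" using u by (auto simp: nbhd_mem)
              have "u \<notin> S"
              proof
                assume "u \<in> S"
                hence "u \<in> T" using T by blast
                thus False using stableD[OF T(1) k(1)] False eku by metis
              qed
              thus ?thesis using uV KS(1) by blast
            qed
          qed
        next
          show "K \<subseteq> closed_nbhd V E k"
          proof
            fix u assume u: "u \<in> K"
            show "u \<in> closed_nbhd V E k"
            proof (cases "u = k")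
              case True thus ?thesis by (simp add: nbhd_mem)
            next
              case False
              hence "E k u" using cliqueD[OF KS(3) kK u] by metis
              moreover have "u \<in> V" using u KS(1) by blast
              ultimately show ?thesis by (simp add: nbhd_mem)
            qed
          qed
        qed
        hence "simplicial_clique V E K" using KS(3) kV unfolding simplicial_clique_def by blast
        thus ?thesis using xK yK by blast
      qed
    qed
  qed
qed

lemma compl_clique: "clique V (compl_graph V E) C \<longleftrightarrow> stable V E C"
  unfolding clique_def stable_def compl_graph_def by auto

lemma compl_stable: "stable V (compl_graph V E) C \<longleftrightarrow> clique V E C"
  unfolding clique_def stable_def compl_graph_def by auto

lemma compl_max_clique: "max_clique V (compl_graph V E) C \<longleftrightarrow> max_stable V E C"
  unfolding max_clique_def max_stable_def compl_clique by simp

lemma compl_max_stable: "max_stable V (compl_graph V E) C \<longleftrightarrow> max_clique V E C"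
  unfolding max_clique_def max_stable_def compl_stable by simp

theorem proposition26:
  fixes V :: "'a set" and E :: "'a \<Rightarrow> 'a \<Rightarrow> bool"
  assumes "graph V E" and "split_graph V E" and "CIS V E"
  shows "cap_edge_simplicial V E"
proof -
  obtain K S where KS: "K \<union> S = V" "K \<inter> S = {}" "clique V E K" "stable V E S"
    using assms(2) unfolding split_graph_def by blast
  have g2a: "\<forall>x y. compl_graph V E x y \<longrightarrow> x \<in> V \<and> y \<in> V \<and> x \<noteq> y \<and> compl_graph V E y x"
  proof (intro allI impI)
    fix x y assume "compl_graph V E x y"
    thus "x \<in> V \<and> y \<in> V \<and> x \<noteq> y \<and> compl_graph V E y x"
      using graphD[OF assms(1)] unfolding compl_graph_def by metis
  qed
  have "finite V" using assms(1) unfolding graph_def by simp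
  hence g2: "graph V (compl_graph V E)" using g2a unfolding graph_def by blast
  have c2: "CIS V (compl_graph V E)"
    unfolding CIS_def compl_max_clique compl_max_stable
  proof (intro allI impI)
    fix C T assume "max_stable V E C \<and> max_clique V E T"
    hence "T \<inter> C \<noteq> {}" using assms(3) unfolding CIS_def by blast
    thus "C \<inter> T \<noteq> {}" by (simp add: Int_commute)
  qed
  have "edge_simplicial V E" using core[OF assms(1) KS assms(3)] .
  moreover have "edge_simplicial V (compl_graph V E)"
  proof (rule core[OF g2 _ _ _ _ c2])
    show "S \<union> K = V" using KS(1) by blast
    show "S \<inter> K = {}" using KS(2) by blast
    show "clique V (compl_graph V E) S" using KS(4) compl_clique by blast
    show "stable V (compl_graph V E) K" using KS(3) compl_stable by blast
  qed
  ultimately show ?thesis unfolding cap_edge_simplicial_def by blast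
qed

end
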